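(* Let $f,g:\mathbb N\to\mathbb C$ and $\beta\in\mathbb C$ satisfy: for every even $n\in\mathbb N$, $g(n+2)f(n+2)-g(n)f(n)\mathbf 1_{\{n\ge2\}}=\beta$. Assume $|f(2n)|>0$ for all $n\ge1$ and that $M_f=\lim_{n\to\infty}n/|f(2n)|\in[0,\infty]$ exists. Let $\mathbb D_{f,\beta}=\{\alpha\in\mathbb C: |1-\alpha\beta|<1,\ |\alpha|<M_f\}$. Then $$\Big[N,\tfrac i2\log\big(g_{N+2}L^2\big)\Big]=-i\mathbf 1$$ holds on the subspace $\mathrm{LH}\{(f_NL^{*2})^n\xi_{\alpha,f}: n\in\mathbb N,\ \alpha\in\mathbb D_{f,\beta}\}$, where $\xi_{\alpha,f}=e^{\alpha f_NL^{*2}}\Omega$.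
   Context: $\ell^2=\ell^2(\mathbb N)$, $\mathbb N=\{0,1,\dots\}$, basis $(\xi_n)$, $\Omega=\xi_0$; $N\xi_n=n\xi_n$ (self-adjoint, maximal domain). $f_NL^{*2}$: $\xi_n\mapsto f(n+2)\xi_{n+2}$; $g_{N+2}L^2$: $\xi_n\mapsto g(n)\xi_{n-2}$ ($n\ge2$), $\xi_0,\xi_1\mapsto0$ (maximal domains). Exponentials by power series on the set where the series converges. For a linear operator $A$, $\mathrm D(\log A)=\{f\in\bigcap_{k\ge0}\mathrm D(A^k):\lim_K\sum_{k=1}^K\frac1k(\mathbf 1-A)^kf\text{ exists}\}$ and $\log Af=-\sum_{k\ge1}\frac1k(\mathbf1-A)^kf$. The commutator $[A,B]=AB-BA$ is defined on $\mathrm D(AB)\cap\mathrm D(BA)$; "$[A,B]=C$ on a subspace $\mathcal D$" means $\mathcal D\subset\mathrm D(AB)\cap\mathrm D(BA)$ and $(AB-BA)\varphi=C\varphi$ for all $\varphi\in\mathcal D$. LH denotes linear hull. *)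

theory Defs
  imports Complex_Main "HOL-Library.Extended_Real"
begin

text \<open>Vectors of l2(N) are represented as coefficient sequences (w.r.t. the basis xi_n);
  (possibly unbounded) linear operators as partial maps, the domain being where they are defined.\<close>

type_synonym vec = "nat \<Rightarrow> complex"
type_synonym op = "vec \<Rightarrow> vec option"

definition l2 :: "vec set" where
  "l2 = {x. summable (\<lambda>n. (cmod (x n))^2)}"

definition l2norm :: "vec \<Rightarrow> real" where
  "l2norm x = sqrt (\<Sum>n. (cmod (x n))^2)"

definition conv_l2 :: "(nat \<Rightarrow> vec) \<Rightarrow> vec \<Rightarrow> bool" where
  "conv_l2 S y \<longleftrightarrow> y \<in> l2 \<and> (\<forall>K. S K \<in> l2) \<and>
     (\<lambda>K. l2norm (\<lambda>m. S K m - y m)) \<longlonglongrightarrow> 0"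

definition lim_l2 :: "(nat \<Rightarrow> vec) \<Rightarrow> vec option" where
  "lim_l2 S = (if \<exists>y. conv_l2 S y then Some (THE y. conv_l2 S y) else None)"

definition basis_vec :: "nat \<Rightarrow> vec" where
  "basis_vec k = (\<lambda>n. if n = k then 1 else 0)"

definition Omega :: vec where
  "Omega = basis_vec 0"

definition dom_op :: "op \<Rightarrow> vec set" where
  "dom_op A = {x. A x \<noteq> None}"

definition I_op :: op where
  "I_op x = (if x \<in> l2 then Some x else None)"

definition comp_op :: "op \<Rightarrow> op \<Rightarrow> op" where
  "comp_op A B x = (case B x of None \<Rightarrow> None | Some y \<Rightarrow> A y)"

definition diff_op :: "op \<Rightarrow> op \<Rightarrow> op" where
  "diff_op A B x = (case (A x, B x) of (Some a, Some b) \<Rightarrow> Some (\<lambda>m. a m - b m) | _ \<Rightarrow> None)"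

definition scale_op :: "complex \<Rightarrow> op \<Rightarrow> op" where
  "scale_op c A x = (case A x of None \<Rightarrow> None | Some y \<Rightarrow> Some (\<lambda>m. c * y m))"

definition pow_op :: "op \<Rightarrow> nat \<Rightarrow> op" where
  "pow_op A k = ((comp_op A) ^^ k) I_op"

definition exp_op :: "op \<Rightarrow> op" where
  "exp_op A x = (if x \<in> (\<Inter>k. dom_op (pow_op A k))
     then lim_l2 (\<lambda>K. \<lambda>m. \<Sum>k\<le>K. (1 / of_nat (fact k)) * the (pow_op A k x) m)
     else None)"

definition log_op :: "op \<Rightarrow> op" where
  "log_op A x = (if x \<in> (\<Inter>k. dom_op (pow_op A k)) \<and> x \<in> (\<Inter>k. dom_op (pow_op (diff_op I_op A) k))
     then (case lim_l2 (\<lambda>K. \<lambda>m. \<Sum>k\<in>{1..K}. (1 / of_nat k) * the (pow_op (diff_op I_op A) k x) m) of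
             None \<Rightarrow> None | Some y \<Rightarrow> Some (\<lambda>m. - y m))
     else None)"

definition N_op :: op where
  "N_op x = (if x \<in> l2 \<and> (\<lambda>n. of_nat n * x n) \<in> l2 then Some (\<lambda>n. of_nat n * x n) else None)"

text \<open>f_N L^{*2}: xi_n |-> f(n+2) xi_{n+2}, maximal domain.\<close>
definition raise_op :: "(nat \<Rightarrow> complex) \<Rightarrow> op" where
  "raise_op f x = (let y = (\<lambda>m. if 2 \<le> m then f m * x (m - 2) else 0) in
     if x \<in> l2 \<and> y \<in> l2 then Some y else None)"

text \<open>g_{N+2} L^2: xi_n |-> g(n) xi_{n-2} (n>=2), xi_0, xi_1 |-> 0, maximal domain.\<close>
definition lower_op :: "(nat \<Rightarrow> complex) \<Rightarrow> op" where
  "lower_op g x = (let y = (\<lambda>m. g (m + 2) * x (m + 2)) in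
     if x \<in> l2 \<and> y \<in> l2 then Some y else None)"

definition comm_eq_on :: "op \<Rightarrow> op \<Rightarrow> op \<Rightarrow> vec set \<Rightarrow> bool" where
  "comm_eq_on A B C D \<longleftrightarrow>
     D \<subseteq> dom_op (comp_op A B) \<inter> dom_op (comp_op B A) \<and>
     (\<forall>\<phi>\<in>D. diff_op (comp_op A B) (comp_op B A) \<phi> = C \<phi>)"

definition lin_hull :: "vec set \<Rightarrow> vec set" where
  "lin_hull S = {x. \<exists>k (v :: nat \<Rightarrow> vec) (c :: nat \<Rightarrow> complex).
      (\<forall>i<k. v i \<in> S) \<and> x = (\<lambda>m. \<Sum>i<k. c i * v i m)}"

definition D_set :: "complex \<Rightarrow> ereal \<Rightarrow> complex set" where
  "D_set \<beta> Mf = {\<alpha>. cmod (1 - \<alpha> * \<beta>) < 1 \<and> ereal (cmod \<alpha>) < Mf}"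

definition xi_vec :: "complex \<Rightarrow> (nat \<Rightarrow> complex) \<Rightarrow> vec option" where
  "xi_vec \<alpha> f = exp_op (scale_op \<alpha> (raise_op f)) Omega"

end

theory Submission
  imports Defs "HOL-Real_Asymp.Real_Asymp" "HOL-Analysis.Analysis"
begin


lemma l2_iff: "x \<in> l2 \<longleftrightarrow> summable (\<lambda>n. (cmod (x n))^2)"
  by (simp add: l2_def)

lemma l2_zero[simp]: "(\<lambda>_. 0) \<in> l2"
  by (simp add: l2_def)

lemma l2_finite_support:
  assumes "finite A" "\<And>m. m \<notin> A \<Longrightarrow> x m = 0"
  shows "x \<in> l2"
  unfolding l2_def using summable_finite[OF assms(1), of "\<lambda>n. (cmod (x n))^2"] assms(2) by simp

lemma l2_geom:
  assumes "\<And>m. cmod (x m) \<le> C * \<rho>^m" "0 \<le> \<rho>" "\<rho> < 1"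
  shows "x \<in> l2"
proof -
  have "summable (\<lambda>m. C^2 * (\<rho>^2)^m)"
    using assms by (intro summable_mult) (simp add: power_less_one_iff abs_square_less_1)
  moreover have "norm ((cmod (x m))^2) \<le> C^2 * (\<rho>^2)^m" for m
  proof -
    have "cmod (x m) \<le> C * \<rho>^m" by (rule assms(1))
    hence "(cmod (x m))^2 \<le> (C * \<rho>^m)^2" by (intro power_mono) auto
    thus ?thesis by (simp add: power_mult_distrib power_mult[symmetric] mult.commute)
  qed
  ultimately show ?thesis unfolding l2_def by (blast intro: summable_comparison_test')
qed

lemma l2norm_nonneg: "x \<in> l2 \<Longrightarrow> l2norm x \<ge> 0"
  unfolding l2norm_def l2_def by (simp add: suminf_nonneg)

lemma partial_le_l2norm:
  assumes "x \<in> l2"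
  shows "sqrt (\<Sum>m<M. (cmod (x m))^2) \<le> l2norm x"
  unfolding l2norm_def using assms unfolding l2_def
  by (intro real_sqrt_le_mono sum_le_suminf) auto

lemma coord_le_l2norm:
  assumes "x \<in> l2"
  shows "cmod (x m) \<le> l2norm x"
proof -
  have "sqrt ((cmod (x m))^2) \<le> sqrt (\<Sum>i<Suc m. (cmod (x i))^2)"
    by (intro real_sqrt_le_mono member_le_sum) auto
  also have "\<dots> \<le> l2norm x" by (rule partial_le_l2norm[OF assms])
  finally show ?thesis by simp
qed

lemma fatou_l2:
  assumes "\<And>M. (\<Sum>m<M. (cmod (x m))^2) \<le> c^2" "0 \<le> c"
  shows "x \<in> l2 \<and> l2norm x \<le> c"
proof -
  have s: "summable (\<lambda>m. (cmod (x m))^2)"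
    by (rule summableI_nonneg_bounded[where x="c^2"]) (use assms in auto)
  have "(\<Sum>m. (cmod (x m))^2) \<le> c^2" by (rule suminf_le_const[OF s assms(1)])
  hence "l2norm x \<le> sqrt (c^2)" unfolding l2norm_def by (rule real_sqrt_le_mono)
  with s assms(2) show ?thesis by (simp add: l2_def)
qed

lemma l2_add_norm:
  assumes "x \<in> l2" "y \<in> l2"
  shows "(\<lambda>m. a * x m + b * y m) \<in> l2 \<and> l2norm (\<lambda>m. a * x m + b * y m) \<le> cmod a * l2norm x + cmod b * l2norm y"
proof (rule fatou_l2)
  fix M
  have "sqrt (\<Sum>m<M. (cmod (a * x m + b * y m))^2) = L2_set (\<lambda>m. cmod (a * x m + b * y m)) {..<M}"
    by (simp add: L2_set_def)
  also have "\<dots> \<le> L2_set (\<lambda>m. cmod a * cmod (x m) + cmod b * cmod (y m)) {..<M}"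
    by (intro L2_set_mono) (auto intro: order_trans[OF norm_triangle_ineq] simp: norm_mult)
  also have "\<dots> \<le> L2_set (\<lambda>m. cmod a * cmod (x m)) {..<M} + L2_set (\<lambda>m. cmod b * cmod (y m)) {..<M}"
    by (rule L2_set_triangle_ineq)
  also have "\<dots> = cmod a * L2_set (\<lambda>m. cmod (x m)) {..<M} + cmod b * L2_set (\<lambda>m. cmod (y m)) {..<M}"
    by (simp add: L2_set_right_distrib)
  also have "\<dots> \<le> cmod a * l2norm x + cmod b * l2norm y"
    using partial_le_l2norm[OF assms(1), of M] partial_le_l2norm[OF assms(2), of M]
    by (intro add_mono mult_left_mono) (auto simp: L2_set_def)
  finally have "sqrt (\<Sum>m<M. (cmod (a * x m + b * y m))^2) \<le> cmod a * l2norm x + cmod b * l2norm y" .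
  moreover have "0 \<le> cmod a * l2norm x + cmod b * l2norm y" using assms by (simp add: l2norm_nonneg)
  ultimately have "(sqrt (\<Sum>m<M. (cmod (a * x m + b * y m))^2))^2 \<le> (cmod a * l2norm x + cmod b * l2norm y)^2"
    by (intro power_mono) (auto intro: sum_nonneg)
  thus "(\<Sum>m<M. (cmod (a * x m + b * y m))^2) \<le> (cmod a * l2norm x + cmod b * l2norm y)^2"
    by (simp add: sum_nonneg)
next
  show "0 \<le> cmod a * l2norm x + cmod b * l2norm y" using assms by (simp add: l2norm_nonneg)
qed

lemma l2_lin: "x \<in> l2 \<Longrightarrow> y \<in> l2 \<Longrightarrow> (\<lambda>m. a * x m + b * y m) \<in> l2"
  using l2_add_norm by blast

lemma l2norm_lin: "x \<in> l2 \<Longrightarrow> y \<in> l2 \<Longrightarrow> l2norm (\<lambda>m. a * x m + b * y m) \<le> cmod a * l2norm x + cmod b * l2norm y"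
  using l2_add_norm by blast




lemma l2_sum:
  assumes "finite A" "\<And>k. k \<in> A \<Longrightarrow> y k \<in> l2"
  shows "(\<lambda>m. \<Sum>k\<in>A. y k m) \<in> l2 \<and> l2norm (\<lambda>m. \<Sum>k\<in>A. y k m) \<le> (\<Sum>k\<in>A. l2norm (y k))"
  using assms
proof (induction A rule: finite_induct)
  case empty
  have "l2norm (\<lambda>m. 0) = 0" by (simp add: l2norm_def)
  then show ?case by simp
next
  case (insert a A)
  hence IH: "(\<lambda>m. \<Sum>k\<in>A. y k m) \<in> l2" "l2norm (\<lambda>m. \<Sum>k\<in>A. y k m) \<le> (\<Sum>k\<in>A. l2norm (y k))"
    by auto
  have ya: "y a \<in> l2" using insert by auto
  have eq: "(\<lambda>m. \<Sum>k\<in>insert a A. y k m) = (\<lambda>m. 1 * y a m + 1 * (\<Sum>k\<in>A. y k m))"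
    using insert by simp
  show ?case unfolding eq
    using l2_add_norm[OF ya IH(1), of 1 1] IH(2) insert by simp
qed

lemma sum_split_ivl:
  fixes h :: "nat \<Rightarrow> 'a::comm_monoid_add"
  assumes "K \<le> K'"
  shows "(\<Sum>k\<le>K'. h k) = (\<Sum>k\<le>K. h k) + (\<Sum>k\<in>{K<..K'}. h k)"
  using assms
proof (induction K' rule: dec_induct)
  case base then show ?case by simp
next
  case (step n)
  have "{K<..Suc n} = insert (Suc n) {K<..n}" using step by auto
  then show ?case using step by (simp add: add_ac)
qed

lemma l2_series:
  assumes yl2: "\<And>k. y k \<in> l2" and sm: "summable (\<lambda>k. l2norm (y k))"
  shows "conv_l2 (\<lambda>K m. \<Sum>k\<le>K. y k m) (\<lambda>m. \<Sum>k. y k m)"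
proof -
  define S where "S = (\<lambda>K m. \<Sum>k\<le>K. y k m)"
  define Y where "Y = (\<lambda>m. \<Sum>k. y k m)"
  define R where "R = (\<lambda>K. (\<Sum>k. l2norm (y k)) - (\<Sum>k\<le>K. l2norm (y k)))"
  have nn: "\<And>k. 0 \<le> l2norm (y k)" using yl2 l2norm_nonneg by blast
  have smm: "summable (\<lambda>k. y k m)" for m
  proof (rule summable_norm_cancel, rule summable_comparison_test'[OF sm])
    show "norm (norm (y n m)) \<le> l2norm (y n)" for n using coord_le_l2norm[OF yl2] by simp
  qed
  have SY: "(\<lambda>K. S K m) \<longlonglongrightarrow> Y m" for m
    unfolding S_def Y_def by (rule summable_LIMSEQ'[OF smm])
  have Sl2: "S K \<in> l2" for K unfolding S_def using l2_sum[of "{..K}" y] yl2 by auto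
  have R0: "R \<longlonglongrightarrow> 0"
  proof -
    have "(\<lambda>K. (\<Sum>k. l2norm (y k)) - (\<Sum>k\<le>K. l2norm (y k))) \<longlonglongrightarrow> (\<Sum>k. l2norm (y k)) - (\<Sum>k. l2norm (y k))"
      by (intro tendsto_diff tendsto_const summable_LIMSEQ'[OF sm])
    thus ?thesis unfolding R_def by simp
  qed
  have Rnn: "0 \<le> R K" for K
    unfolding R_def using sum_le_suminf[OF sm, of "{..K}"] nn by simp
  have bound: "(\<Sum>m<M. (cmod (S K m - Y m))^2) \<le> (R K)^2" for K M
  proof -
    have fin: "(\<Sum>m<M. (cmod (S K' m - S K m))^2) \<le> (R K)^2" if "K \<le> K'" for K'
    proof -
      have eq: "(\<lambda>m. S K' m - S K m) = (\<lambda>m. \<Sum>k\<in>{K<..K'}. y k m)"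
        unfolding S_def using sum_split_ivl[OF that] by (auto simp: fun_eq_iff algebra_simps)
      have l: "(\<lambda>m. S K' m - S K m) \<in> l2" and n: "l2norm (\<lambda>m. S K' m - S K m) \<le> (\<Sum>k\<in>{K<..K'}. l2norm (y k))"
        unfolding eq using l2_sum[of "{K<..K'}" y] yl2 by auto
      have "(\<Sum>k\<in>{K<..K'}. l2norm (y k)) = (\<Sum>k\<le>K'. l2norm (y k)) - (\<Sum>k\<le>K. l2norm (y k))"
        using sum_split_ivl[OF that, of "\<lambda>k. l2norm (y k)"] by simp
      also have "\<dots> \<le> R K" unfolding R_def using sum_le_suminf[OF sm, of "{..K'}"] nn by simp
      finally have nR: "l2norm (\<lambda>m. S K' m - S K m) \<le> R K" using n by linarith
      have "sqrt (\<Sum>m<M. (cmod (S K' m - S K m))^2) \<le> R K"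
        using partial_le_l2norm[OF l, of M] nR by simp
      hence "(sqrt (\<Sum>m<M. (cmod (S K' m - S K m))^2))^2 \<le> (R K)^2"
        by (intro power_mono) (auto intro: sum_nonneg)
      thus ?thesis by (simp add: sum_nonneg)
    qed
    have lim: "(\<lambda>K'. \<Sum>m<M. (cmod (S K' m - S K m))^2) \<longlonglongrightarrow> (\<Sum>m<M. (cmod (Y m - S K m))^2)"
      by (intro tendsto_intros SY)
    have "(\<Sum>m<M. (cmod (Y m - S K m))^2) \<le> (R K)^2"
      by (rule LIMSEQ_le_const2[OF lim]) (use fin in blast)
    moreover have "cmod (Y m - S K m) = cmod (S K m - Y m)" for m by (rule norm_minus_commute)
    ultimately show ?thesis by simp
  qed
  have dl2: "(\<lambda>m. S K m - Y m) \<in> l2" and dn: "l2norm (\<lambda>m. S K m - Y m) \<le> R K" for K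
    using fatou_l2[OF bound Rnn] by auto
  have Yl2: "Y \<in> l2"
  proof -
    have "(\<lambda>m. 1 * S 0 m + (-1) * (S 0 m - Y m)) \<in> l2" by (rule l2_lin[OF Sl2 dl2])
    thus ?thesis by simp
  qed
  have "(\<lambda>K. l2norm (\<lambda>m. S K m - Y m)) \<longlonglongrightarrow> 0"
  proof (rule Lim_null_comparison[OF _ R0])
    show "\<forall>\<^sub>F K in sequentially. norm (l2norm (\<lambda>m. S K m - Y m)) \<le> R K"
      using dn l2norm_nonneg[OF dl2] by (intro always_eventually) simp
  qed
  thus ?thesis unfolding conv_l2_def using Yl2 Sl2 by (simp add: S_def Y_def)
qed

lemma conv_pointwise:
  assumes "conv_l2 S y"
  shows "(\<lambda>K. S K m) \<longlonglongrightarrow> y m"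
proof -
  have yl: "y \<in> l2" and Sl: "\<And>K. S K \<in> l2" and lim: "(\<lambda>K. l2norm (\<lambda>m. S K m - y m)) \<longlonglongrightarrow> 0"
    using assms unfolding conv_l2_def by auto
  have dl: "(\<lambda>m. S K m - y m) \<in> l2" for K
    using l2_lin[OF Sl yl, where a=1 and b="-1"] by simp
  have "(\<lambda>K. S K m - y m) \<longlonglongrightarrow> 0"
    by (rule Lim_null_comparison[OF _ lim]) (use coord_le_l2norm[OF dl] in \<open>intro always_eventually, simp\<close>)
  hence "(\<lambda>K. (S K m - y m) + y m) \<longlonglongrightarrow> 0 + y m" by (intro tendsto_add tendsto_const)
  thus ?thesis by simp
qed

lemma lim_l2_eq:
  assumes "conv_l2 S y"
  shows "lim_l2 S = Some y"
proof -
  have "(THE y. conv_l2 S y) = y"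
  proof (rule the_equality)
    show "conv_l2 S y" by (rule assms)
  next
    fix z assume "conv_l2 S z"
    show "z = y"
    proof
      fix m show "z m = y m"
        using LIMSEQ_unique[OF conv_pointwise[OF \<open>conv_l2 S z\<close>] conv_pointwise[OF assms]] .
    qed
  qed
  thus ?thesis using assms unfolding lim_l2_def by auto
qed




definition Ff :: "(nat \<Rightarrow> complex) \<Rightarrow> nat \<Rightarrow> complex" where
  "Ff f k = (\<Prod>i<k. f (2*i+2))"
definition Ee :: "(nat \<Rightarrow> complex) \<Rightarrow> complex \<Rightarrow> nat \<Rightarrow> complex" where
  "Ee f \<alpha> k = \<alpha>^k * Ff f k / of_nat (fact k)"
definition vec_of :: "(nat \<Rightarrow> complex) \<Rightarrow> complex \<Rightarrow> (nat \<Rightarrow> complex) \<Rightarrow> (nat \<Rightarrow> complex)" where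
  "vec_of f \<alpha> p = (\<lambda>m. if even m then Ee f \<alpha> (m div 2) * p (m div 2) else 0)"
definition Pf :: "nat \<Rightarrow> nat \<Rightarrow> complex" where
  "Pf n j = (\<Prod>i<n. (of_nat j - of_nat i))"
definition ww :: "(nat \<Rightarrow> complex) \<Rightarrow> complex \<Rightarrow> nat \<Rightarrow> (nat \<Rightarrow> complex)" where
  "ww f \<alpha> n = vec_of f \<alpha> (\<lambda>j. Pf n j / \<alpha>^n)"
definition Af :: "(nat \<Rightarrow> complex) \<Rightarrow> (nat \<Rightarrow> complex) \<Rightarrow> (nat \<Rightarrow> complex)" where
  "Af f x = (\<lambda>m. if 2 \<le> m then f m * x (m-2) else 0)"
definition Bf :: "(nat \<Rightarrow> complex) \<Rightarrow> (nat \<Rightarrow> complex) \<Rightarrow> (nat \<Rightarrow> complex)" where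
  "Bf g x = (\<lambda>m. g (m+2) * x (m+2))"
definition Nf :: "(nat \<Rightarrow> complex) \<Rightarrow> (nat \<Rightarrow> complex)" where
  "Nf x = (\<lambda>m. of_nat m * x m)"
definition Tf :: "(nat \<Rightarrow> complex) \<Rightarrow> (nat \<Rightarrow> complex) \<Rightarrow> (nat \<Rightarrow> complex)" where
  "Tf g x = (\<lambda>m. x m - g (m+2) * x (m+2))"

lemma Pf_0[simp]: "Pf 0 j = 1" by (simp add: Pf_def)
lemma Pf_Suc: "Pf (Suc n) j = Pf n j * (of_nat j - of_nat n)"
  by (simp add: Pf_def)
lemma Pf_Suc_Suc: "Pf (Suc n) (Suc j) = of_nat (Suc j) * Pf n j"
  unfolding Pf_def by (subst prod.lessThan_Suc_shift) simp
lemma Pf_Suc_0: "Pf (Suc n) 0 = 0"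
  unfolding Pf_def by (subst prod.lessThan_Suc_shift) simp
lemma Pf_shift: "Pf n (Suc j) = Pf n j + of_nat n * Pf (n-1) j"
proof (cases n)
  case 0 then show ?thesis by simp
next
  case (Suc k)
  have "Pf (Suc k) (Suc j) = of_nat (Suc j) * Pf k j" by (rule Pf_Suc_Suc)
  moreover have "Pf (Suc k) j = Pf k j * (of_nat j - of_nat k)" by (rule Pf_Suc)
  ultimately show ?thesis using Suc by (simp add: algebra_simps)
qed
lemma Pf_pred: "Pf (Suc n) j = of_nat j * Pf n (j - 1)"
  by (cases j) (simp_all add: Pf_Suc_0 Pf_Suc_Suc)

lemma Ee_Suc: "Ee f \<alpha> (Suc k) = Ee f \<alpha> k * \<alpha> * f (2*k+2) / of_nat (Suc k)"
  by (simp add: Ee_def Ff_def field_simps)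

lemma vec_of_lin: "vec_of f \<alpha> (\<lambda>j. a * p j + b * q j) = (\<lambda>m. a * vec_of f \<alpha> p m + b * vec_of f \<alpha> q m)"
  by (auto simp: vec_of_def fun_eq_iff algebra_simps)

lemma Nf_vec: "Nf (vec_of f \<alpha> p) = vec_of f \<alpha> (\<lambda>j. 2 * of_nat j * p j)"
proof
  fix m show "Nf (vec_of f \<alpha> p) m = vec_of f \<alpha> (\<lambda>j. 2 * of_nat j * p j) m"
  proof (cases "even m")
    case True then obtain j where "m = 2*j" by blast
    then show ?thesis by (simp add: Nf_def vec_of_def)
  qed (simp add: Nf_def vec_of_def)
qed

lemma Bf_vec:
  assumes gf: "\<And>j. g (2*j+2) * f (2*j+2) = of_nat (Suc j) * \<beta>"
  shows "Bf g (vec_of f \<alpha> p) = vec_of f \<alpha> (\<lambda>j. \<alpha> * \<beta> * p (Suc j))"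
proof
  fix m show "Bf g (vec_of f \<alpha> p) m = vec_of f \<alpha> (\<lambda>j. \<alpha> * \<beta> * p (Suc j)) m"
  proof (cases "even m")
    case True then obtain j where m: "m = 2*j" by blast
    have "g (2*j+2) * Ee f \<alpha> (Suc j) = Ee f \<alpha> j * \<alpha> * (g (2*j+2) * f (2*j+2)) / of_nat (Suc j)"
      by (simp add: Ee_Suc)
    also have "\<dots> = Ee f \<alpha> j * \<alpha> * (of_nat (Suc j) * \<beta>) / of_nat (Suc j)" by (simp only: gf)
    also have "\<dots> = Ee f \<alpha> j * \<alpha> * \<beta>" by (simp del: of_nat_Suc)
    finally have "g (2*j+2) * Ee f \<alpha> (Suc j) = Ee f \<alpha> j * \<alpha> * \<beta>" .
    moreover have "(2*j+2) div 2 = Suc j" by simp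
    ultimately show ?thesis using m by (simp add: Bf_def vec_of_def)
  next
    case False then show ?thesis by (simp add: Bf_def vec_of_def)
  qed
qed

lemma Af_vec:
  assumes "\<alpha> \<noteq> 0"
  shows "Af f (vec_of f \<alpha> p) = vec_of f \<alpha> (\<lambda>j. of_nat j * p (j - 1) / \<alpha>)"
proof
  fix m show "Af f (vec_of f \<alpha> p) m = vec_of f \<alpha> (\<lambda>j. of_nat j * p (j - 1) / \<alpha>) m"
  proof (cases "even m")
    case True then obtain j where m: "m = 2*j" by blast
    show ?thesis
    proof (cases j)
      case 0 then show ?thesis using m by (simp add: Af_def vec_of_def)
    next
      case (Suc k)
      have e: "Ee f \<alpha> (Suc k) * of_nat (Suc k) / \<alpha> = Ee f \<alpha> k * f (2*k+2)"
        using assms by (simp add: Ee_Suc del: of_nat_Suc)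
      have "m - 2 = 2 * k" "m div 2 = Suc k" "2 \<le> m" "even (m - 2)" "(m-2) div 2 = k" "m = 2*k+2" using m Suc by auto
      moreover have "f (2*k+2) * (Ee f \<alpha> k * p k) = Ee f \<alpha> (Suc k) * (of_nat (Suc k) * p k / \<alpha>)"
        using assms by (simp add: Ee_Suc field_simps del: of_nat_Suc)
      ultimately show ?thesis by (simp add: Af_def vec_of_def)
    qed
  next
    case False
    hence "\<not> even (m - 2)" if "2 \<le> m" using that by auto
    then show ?thesis using False by (auto simp add: Af_def vec_of_def)
  qed
qed

lemma Af_ww: "\<alpha> \<noteq> 0 \<Longrightarrow> Af f (ww f \<alpha> n) = ww f \<alpha> (Suc n)"
  unfolding ww_def by (simp add: Af_vec Pf_pred ac_simps)

lemma Nf_ww: "\<alpha> \<noteq> 0 \<Longrightarrow> Nf (ww f \<alpha> n) = (\<lambda>m. (2*\<alpha>) * ww f \<alpha> (Suc n) m + (2 * of_nat n) * ww f \<alpha> n m)"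
  unfolding ww_def Nf_vec vec_of_lin[symmetric]
  by (rule arg_cong[where f="vec_of f \<alpha>"]) (auto simp: fun_eq_iff Pf_Suc field_simps)

lemma Bf_ww:
  assumes gf: "\<And>j. g (2*j+2) * f (2*j+2) = of_nat (Suc j) * \<beta>" and a: "\<alpha> \<noteq> 0"
  shows "Bf g (ww f \<alpha> n) = (\<lambda>m. (\<alpha>*\<beta>) * ww f \<alpha> n m + (of_nat n * \<beta>) * ww f \<alpha> (n-1) m)"
  unfolding ww_def Bf_vec[OF gf] vec_of_lin[symmetric]
proof (rule arg_cong[where f="vec_of f \<alpha>"], rule ext)
  fix j
  show "\<alpha> * \<beta> * (Pf n (Suc j) / \<alpha> ^ n) = \<alpha> * \<beta> * (Pf n j / \<alpha> ^ n) + of_nat n * \<beta> * (Pf (n - 1) j / \<alpha> ^ (n - 1))"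
  proof (cases n)
    case 0 then show ?thesis by simp
  next
    case (Suc k) then show ?thesis using a by (simp add: Pf_shift field_simps)
  qed
qed

lemma Tf_Bf: "Tf g x = (\<lambda>m. x m - Bf g x m)"
  by (simp add: Tf_def Bf_def)




lemma pow_op_0: "pow_op A 0 x = I_op x" by (simp add: pow_op_def)
lemma pow_op_Suc: "pow_op A (Suc k) x = (case pow_op A k x of None \<Rightarrow> None | Some y \<Rightarrow> A y)"
  by (simp add: pow_op_def comp_op_def)

lemma pow_op_inv:
  assumes "V \<subseteq> l2" "\<And>x. x \<in> V \<Longrightarrow> A x = Some (h x) \<and> h x \<in> V" "x \<in> V"
  shows "pow_op A k x = Some ((h^^k) x) \<and> (h^^k) x \<in> V"
proof (induction k)
  case 0 then show ?case using assms by (auto simp: pow_op_0 I_op_def)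
next
  case (Suc k) then show ?case using assms(2) by (simp add: pow_op_Suc)
qed

lemma poly_geom:
  fixes q :: real
  assumes "0 < q" "q < 1"
  shows "\<exists>K>0. \<forall>j. (real j + real n) ^ n * q ^ j \<le> K"
proof -
  have "(\<lambda>j. (real j + real n) ^ n * q ^ j) \<longlonglongrightarrow> 0" using assms by real_asymp
  hence "Bseq (\<lambda>j. (real j + real n) ^ n * q ^ j)" by (intro convergent_imp_Bseq convergentI)
  then obtain K where "K > 0" "\<And>j. norm ((real j + real n) ^ n * q ^ j) \<le> K" by (auto simp: Bseq_def)
  thus ?thesis by (intro exI[of _ K]) (auto intro: order_trans[OF abs_ge_self])
qed

lemma Pf_bound: "cmod (Pf n j) \<le> (real j + real n) ^ n"
proof -
  have "cmod (Pf n j) = (\<Prod>i<n. cmod (of_nat j - of_nat i))" by (simp add: Pf_def prod_norm)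
  also have "\<dots> \<le> (\<Prod>i<n. real j + real n)"
  proof (rule prod_mono)
    fix i assume "i \<in> {..<n}"
    have "cmod (of_nat j - of_nat i :: complex) \<le> cmod (of_nat j :: complex) + cmod (of_nat i :: complex)"
      by (rule norm_triangle_ineq4)
    also have "\<dots> \<le> real j + real n" using \<open>i \<in> {..<n}\<close> by simp
    finally show "0 \<le> cmod (of_nat j - of_nat i :: complex) \<and> cmod (of_nat j - of_nat i :: complex) \<le> real j + real n" by simp
  qed
  finally show ?thesis by simp
qed

locale mtsetup =
  fixes f g :: "nat \<Rightarrow> complex" and \<beta> :: complex and Mf :: ereal
  assumes h1: "\<forall>n. even n \<longrightarrow> g (n + 2) * f (n + 2) - (if 2 \<le> n then g n * f n else 0) = \<beta>"
    and h2: "\<forall>n\<ge>1. cmod (f (2 * n)) > 0"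
    and h3: "(\<lambda>n. ereal (real n / cmod (f (2 * n)))) \<longlonglongrightarrow> Mf"
begin

lemma gf: "g (2*j+2) * f (2*j+2) = of_nat (Suc j) * \<beta>"
proof (induction j)
  case 0 then show ?case using h1[rule_format, of 0] by simp
next
  case (Suc j)
  have "g (2*j+2+2) * f (2*j+2+2) - g (2*j+2) * f (2*j+2) = \<beta>" using h1[rule_format, of "2*j+2"] by simp
  hence "g (2*Suc j+2) * f (2*Suc j+2) = \<beta> + of_nat (Suc j) * \<beta>" using Suc by (simp add: algebra_simps)
  thus ?case by (simp add: algebra_simps)
qed

lemma E_bound:
  assumes "\<alpha> \<noteq> 0" "ereal (cmod \<alpha>) < Mf"
  shows "\<exists>C r. 0 < r \<and> r < 1 \<and> (\<forall>k. cmod (Ee f \<alpha> k) \<le> C * r^k)"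
proof -
  obtain c where c1: "ereal (cmod \<alpha>) < ereal c" and c2: "ereal c < Mf" using ereal_dense2[OF assms(2)] by blast
  have ca: "cmod \<alpha> < c" using c1 by simp
  have cpos: "0 < c" using ca assms(1) by (metis norm_ge_zero order_le_less_trans)
  have "eventually (\<lambda>n. ereal c < ereal (real n / cmod (f (2 * n)))) sequentially"
    by (rule order_tendstoD(1)[OF h3 c2])
  then obtain N where N: "\<And>n. n \<ge> N \<Longrightarrow> c < real n / cmod (f (2 * n))"
    by (auto simp: eventually_sequentially)
  define r where "r = cmod \<alpha> / c"
  have r0: "0 < r" "r < 1" using ca cpos assms(1) by (auto simp: r_def)
  have stp: "cmod (Ee f \<alpha> (Suc k)) \<le> r * cmod (Ee f \<alpha> k)" if "k \<ge> N" for k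
  proof -
    have "c < real (Suc k) / cmod (f (2 * Suc k))" using N[of "Suc k"] that by simp
    moreover have fp: "cmod (f (2 * Suc k)) > 0" using h2 by auto
    ultimately have "c * cmod (f (2 * Suc k)) < real (Suc k)" by (simp add: field_simps)
    hence fb: "cmod (f (2*k+2)) \<le> real (Suc k) / c" using cpos by (simp add: field_simps)
    have "cmod (Ee f \<alpha> (Suc k)) = cmod (Ee f \<alpha> k) * cmod \<alpha> * cmod (f (2*k+2)) / real (Suc k)"
      by (simp add: Ee_Suc norm_mult norm_divide del: of_nat_Suc)
    also have "\<dots> \<le> cmod (Ee f \<alpha> k) * cmod \<alpha> * (real (Suc k) / c) / real (Suc k)"
      by (intro divide_right_mono mult_left_mono fb) auto
    also have "\<dots> = r * cmod (Ee f \<alpha> k)" by (simp add: r_def del: of_nat_Suc)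
    finally show ?thesis .
  qed
  have tail: "cmod (Ee f \<alpha> k) \<le> cmod (Ee f \<alpha> N) * r^(k - N)" if "k \<ge> N" for k
    using that
  proof (induction k rule: dec_induct)
    case base then show ?case by simp
  next
    case (step k)
    have "cmod (Ee f \<alpha> (Suc k)) \<le> r * cmod (Ee f \<alpha> k)" by (rule stp[OF step.hyps(1)])
    also have "\<dots> \<le> r * (cmod (Ee f \<alpha> N) * r^(k - N))" using step.IH r0 by (intro mult_left_mono) auto
    also have "\<dots> = cmod (Ee f \<alpha> N) * r^(Suc k - N)" using step.hyps(1) by (simp add: Suc_diff_le)
    finally show ?case .
  qed
  define C where "C = cmod (Ee f \<alpha> N) / r^N + (\<Sum>i<N. cmod (Ee f \<alpha> i) / r^i)"
  have "cmod (Ee f \<alpha> k) \<le> C * r^k" for k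
  proof (cases "k \<ge> N")
    case True
    have "cmod (Ee f \<alpha> k) \<le> cmod (Ee f \<alpha> N) * r^(k - N)" by (rule tail[OF True])
    also have "\<dots> = cmod (Ee f \<alpha> N) / r^N * r^k" using r0 True by (simp add: power_diff)
    also have "\<dots> \<le> C * r^k" unfolding C_def using r0 by (intro mult_right_mono) (auto intro!: sum_nonneg)
    finally show ?thesis .
  next
    case False
    have "cmod (Ee f \<alpha> k) = cmod (Ee f \<alpha> k) / r^k * r^k" using r0 by simp
    also have "\<dots> \<le> C * r^k" unfolding C_def using r0 False
      by (intro mult_right_mono) (auto intro!: order_trans[OF _ add_increasing[OF _ order_refl]] member_le_sum)
    finally show ?thesis .
  qed
  thus ?thesis using r0 by blast
qed

end



context mtsetup begin

lemma Dset_facts: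
  assumes "\<alpha> \<in> D_set \<beta> Mf"
  shows "\<alpha> \<noteq> 0" "ereal (cmod \<alpha>) < Mf" "cmod (1 - \<alpha> * \<beta>) < 1"
  using assms by (auto simp: D_set_def)

lemma ww_geom:
  assumes "\<alpha> \<noteq> 0" "ereal (cmod \<alpha>) < Mf"
  shows "\<exists>D \<rho>. 0 \<le> \<rho> \<and> \<rho> < 1 \<and> (\<forall>m. cmod (ww f \<alpha> n m) \<le> D * \<rho>^m)"
proof -
  obtain C r where r: "0 < r" "r < 1" and Eb: "\<And>k. cmod (Ee f \<alpha> k) \<le> C * r^k"
    using E_bound[OF assms] by blast
  have C0: "0 \<le> C" using Eb[of 0] by (metis norm_ge_zero order_trans power_0 mult_1_right)
  define s where "s = sqrt r"
  have s: "0 < s" "s < 1" using r by (auto simp: s_def)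
  obtain K where K: "K > 0" "\<And>j. (real j + real n) ^ n * s ^ j \<le> K" using poly_geom[OF s] by blast
  define \<rho> where "\<rho> = sqrt s"
  have \<rho>: "0 \<le> \<rho>" "\<rho> < 1" using s by (auto simp: \<rho>_def)
  have rs: "r^j = s^j * s^j" for j by (simp add: s_def r power_mult_distrib[symmetric] order_less_imp_le[OF r(1)])
  have s\<rho>: "s^j = \<rho>^(2*j)" for j by (simp add: \<rho>_def power_mult order_less_imp_le[OF s(1)])
  define D where "D = C * K / cmod \<alpha> ^ n"
  have D0: "0 \<le> D" using C0 K by (simp add: D_def)
  have "cmod (ww f \<alpha> n m) \<le> D * \<rho>^m" for m
  proof (cases "even m")
    case True then obtain j where m: "m = 2*j" by blast
    have "cmod (ww f \<alpha> n m) = cmod (Ee f \<alpha> j) * cmod (Pf n j) / cmod \<alpha> ^ n"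
      using m by (simp add: ww_def vec_of_def norm_mult norm_divide norm_power)
    also have "\<dots> \<le> (C * r^j) * (real j + real n)^n / cmod \<alpha> ^ n"
      by (intro divide_right_mono mult_mono Eb Pf_bound) (use C0 r in auto)
    also have "\<dots> = C * ((real j + real n)^n * s^j) * s^j / cmod \<alpha> ^ n" by (simp add: rs)
    also have "\<dots> \<le> C * K * s^j / cmod \<alpha> ^ n"
      using C0 K s by (intro divide_right_mono mult_right_mono mult_left_mono) auto
    also have "\<dots> = D * \<rho>^m" by (simp add: D_def m s\<rho>)
    finally show ?thesis .
  next
    case False then show ?thesis using D0 \<rho> by (simp add: ww_def vec_of_def)
  qed
  thus ?thesis using \<rho> by blast
qed

lemma ww_l2: "\<alpha> \<noteq> 0 \<Longrightarrow> ereal (cmod \<alpha>) < Mf \<Longrightarrow> ww f \<alpha> n \<in> l2"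
  using ww_geom[of \<alpha> n] l2_geom by blast

lemma raise_ww: "\<alpha> \<noteq> 0 \<Longrightarrow> ereal (cmod \<alpha>) < Mf \<Longrightarrow> raise_op f (ww f \<alpha> n) = Some (ww f \<alpha> (Suc n))"
  using ww_l2[of \<alpha> n] ww_l2[of \<alpha> "Suc n"] Af_ww[of \<alpha> f n]
  by (simp add: raise_op_def Af_def Let_def)

lemma pow_raise_ww:
  assumes "\<alpha> \<noteq> 0" "ereal (cmod \<alpha>) < Mf"
  shows "pow_op (raise_op f) n (ww f \<alpha> 0) = Some (ww f \<alpha> n)"
proof (induction n)
  case 0 then show ?case using ww_l2[OF assms, of 0] by (simp add: pow_op_0 I_op_def)
next
  case (Suc n) then show ?case using raise_ww[OF assms] by (simp add: pow_op_Suc)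
qed

lemma xi_vec_eq:
  assumes a: "\<alpha> \<noteq> 0" "ereal (cmod \<alpha>) < Mf"
  shows "xi_vec \<alpha> f = Some (ww f \<alpha> 0)"
proof -
  define u where "u = (\<lambda>k m. if m = 2*k then \<alpha>^k * Ff f k else (0::complex))"
  have ul2: "u k \<in> l2" for k by (rule l2_finite_support[of "{2*k}"]) (auto simp: u_def)
  have Au: "(\<lambda>m. if 2 \<le> m then f m * u k (m - 2) else 0) = Af f (u k)" for k by (simp add: Af_def)
  have Aul2: "Af f (u k) \<in> l2" for k
    by (rule l2_finite_support[of "{2*k+2}"]) (auto simp: u_def Af_def)
  have scaled: "(\<lambda>m. \<alpha> * Af f (u k) m) = u (Suc k)" for k
  proof
    fix m show "\<alpha> * Af f (u k) m = u (Suc k) m"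
      by (cases "m = 2*k+2") (auto simp: u_def Af_def Ff_def)
  qed
  have powu: "pow_op (scale_op \<alpha> (raise_op f)) k Omega = Some (u k)" for k
  proof (induction k)
    case 0
    have "Omega = u 0" by (auto simp: Omega_def basis_vec_def u_def Ff_def)
    then show ?case using ul2[of 0] by (simp add: pow_op_0 I_op_def)
  next
    case (Suc k)
    show ?case using Suc ul2[of k] Aul2[of k] scaled[of k]
      by (simp add: pow_op_Suc scale_op_def raise_op_def Let_def Au)
  qed
  define y where "y = (\<lambda>k m. (1 / of_nat (fact k)) * u k m)"
  have yeq: "y k = (\<lambda>m. if m = 2*k then Ee f \<alpha> k else 0)" for k
    by (auto simp: y_def u_def Ee_def fun_eq_iff)
  have yl2: "y k \<in> l2" for k unfolding yeq by (rule l2_finite_support[of "{2*k}"]) auto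
  have yn: "l2norm (y k) = cmod (Ee f \<alpha> k)" for k
  proof -
    have "(\<lambda>m. (cmod (y k m))^2) = (\<lambda>m. if m = 2*k then (cmod (Ee f \<alpha> k))^2 else 0)"
      by (auto simp: yeq)
    moreover have "(\<lambda>m. if m = 2*k then (cmod (Ee f \<alpha> k))^2 else 0) sums (cmod (Ee f \<alpha> k))^2"
      using sums_single[of "2*k" "\<lambda>_. (cmod (Ee f \<alpha> k))^2"] by simp
    ultimately show ?thesis unfolding l2norm_def by (simp add: sums_iff)
  qed
  obtain C r where r: "0 < r" "r < 1" and Eb: "\<And>k. cmod (Ee f \<alpha> k) \<le> C * r^k"
    using E_bound[OF a] by blast
  have sm: "summable (\<lambda>k. l2norm (y k))"
  proof (rule summable_comparison_test'[where g="\<lambda>k. C * r^k"])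
    show "summable (\<lambda>k. C * r^k)" using r by (intro summable_mult) simp
    show "norm (l2norm (y k)) \<le> C * r^k" for k using Eb[of k] by (simp add: yn)
  qed
  have conv: "conv_l2 (\<lambda>K m. \<Sum>k\<le>K. y k m) (\<lambda>m. \<Sum>k. y k m)" by (rule l2_series[OF yl2 sm])
  have lim: "(\<lambda>m. \<Sum>k. y k m) = ww f \<alpha> 0"
  proof
    fix m show "(\<Sum>k. y k m) = ww f \<alpha> 0 m"
    proof (cases "even m")
      case True
      have "(\<lambda>k. y k m) = (\<lambda>k. if k = m div 2 then Ee f \<alpha> k else 0)"
        using True by (auto simp: yeq fun_eq_iff)
      moreover have "(\<lambda>k. if k = m div 2 then Ee f \<alpha> k else 0) sums Ee f \<alpha> (m div 2)"
        by (rule sums_single)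
      ultimately show ?thesis using True by (simp add: sums_iff ww_def vec_of_def)
    next
      case False
      hence "(\<lambda>k. y k m) = (\<lambda>k. 0)" by (auto simp: yeq fun_eq_iff)
      then show ?thesis using False by (simp add: ww_def vec_of_def)
    qed
  qed
  have "(\<lambda>K m. \<Sum>k\<le>K. 1 / of_nat (fact k) * the (pow_op (scale_op \<alpha> (raise_op f)) k Omega) m)
        = (\<lambda>K m. \<Sum>k\<le>K. y k m)" by (simp add: powu y_def)
  moreover have "Omega \<in> (\<Inter>k. dom_op (pow_op (scale_op \<alpha> (raise_op f)) k))"
    by (simp add: dom_op_def powu)
  ultimately show ?thesis
    unfolding xi_vec_def exp_op_def using lim_l2_eq[OF conv] lim by simp
qed

end



lemma LH_induct[consumes 1, case_names zero step]:
  assumes x: "x \<in> lin_hull S"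
    and z: "P (\<lambda>_. 0)"
    and st: "\<And>x v c. x \<in> lin_hull S \<Longrightarrow> P x \<Longrightarrow> v \<in> S \<Longrightarrow> P (\<lambda>m. x m + c * v m)"
  shows "P x"
proof -
  obtain k :: nat and v :: "nat \<Rightarrow> nat \<Rightarrow> complex" and c :: "nat \<Rightarrow> complex" where vS: "\<forall>i<k. v i \<in> S" and xe: "x = (\<lambda>m. \<Sum>i<k. c i * v i m)"
    using x unfolding lin_hull_def mem_Collect_eq by blast
  have "\<forall>j\<le>k. (\<lambda>m. \<Sum>i<j. c i * v i m) \<in> lin_hull S \<and> P (\<lambda>m. \<Sum>i<j. c i * v i m)"
  proof (intro allI impI)
    fix j assume "j \<le> k"
    then show "(\<lambda>m. \<Sum>i<j. c i * v i m) \<in> lin_hull S \<and> P (\<lambda>m. \<Sum>i<j. c i * v i m)"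
    proof (induction j)
      case 0
      have "(\<lambda>m. \<Sum>i<0. c i * v i m) \<in> lin_hull S"
        unfolding lin_hull_def by (rule CollectI, rule exI[of _ 0]) simp
      then show ?case using z by simp
    next
      case (Suc j)
      hence IH: "(\<lambda>m. \<Sum>i<j. c i * v i m) \<in> lin_hull S" "P (\<lambda>m. \<Sum>i<j. c i * v i m)" by auto
      have vj: "v j \<in> S" using vS Suc.prems by auto
      have mem: "(\<lambda>m. \<Sum>i<Suc j. c i * v i m) \<in> lin_hull S"
        unfolding lin_hull_def
        by (rule CollectI, rule exI[of _ "Suc j"], rule exI[of _ v], rule exI[of _ c]) (use vS Suc.prems in auto)
      have "P (\<lambda>m. (\<Sum>i<j. c i * v i m) + c j * v j m)" by (rule st[OF IH vj])
      then show ?case using mem by simp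
    qed
  qed
  thus ?thesis using xe by auto
qed

lemma LH_zero: "(\<lambda>_. 0) \<in> lin_hull S"
  unfolding lin_hull_def by (rule CollectI, rule exI[of _ 0]) simp

lemma LH_gen: "v \<in> S \<Longrightarrow> v \<in> lin_hull S"
  unfolding lin_hull_def
  by (rule CollectI, rule exI[of _ 1], rule exI[of _ "\<lambda>_. v"], rule exI[of _ "\<lambda>_. 1"]) simp

lemma LH_add_gen:
  assumes "x \<in> lin_hull S" "v \<in> S"
  shows "(\<lambda>m. x m + c * v m) \<in> lin_hull S"
proof -
  obtain k :: nat and w :: "nat \<Rightarrow> nat \<Rightarrow> complex" and d :: "nat \<Rightarrow> complex" where wS: "\<forall>i<k. w i \<in> S" and xe: "x = (\<lambda>m. \<Sum>i<k. d i * w i m)"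
    using assms(1) unfolding lin_hull_def mem_Collect_eq by blast
  define w' where "w' = w(k := v)"
  define d' where "d' = d(k := c)"
  have "(\<lambda>m. x m + c * v m) = (\<lambda>m. \<Sum>i<Suc k. d' i * w' i m)"
    by (simp add: xe w'_def d'_def)
  moreover have "\<forall>i<Suc k. w' i \<in> S" using wS assms(2) by (auto simp: w'_def less_Suc_eq)
  ultimately show ?thesis unfolding lin_hull_def by blast
qed

lemma LH_scale:
  assumes "x \<in> lin_hull S" shows "(\<lambda>m. a * x m) \<in> lin_hull S"
  using assms
proof (induction rule: LH_induct)
  case zero show ?case using LH_zero by simp
next
  case (step x v c)
  have "(\<lambda>m. a * x m + (a * c) * v m) \<in> lin_hull S" using step LH_add_gen by blast
  thus ?case by (simp add: algebra_simps)
qed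

lemma LH_add:
  assumes "y \<in> lin_hull S" "x \<in> lin_hull S" shows "(\<lambda>m. x m + y m) \<in> lin_hull S"
proof -
  have "\<forall>x\<in>lin_hull S. (\<lambda>m. x m + y m) \<in> lin_hull S"
    using assms(1)
  proof (induction rule: LH_induct)
    case zero then show ?case by simp
  next
    case (step y v c)
    show ?case
    proof
      fix x assume "x \<in> lin_hull S"
      hence "(\<lambda>m. x m + y m) \<in> lin_hull S" using step by blast
      hence "(\<lambda>m. (x m + y m) + c * v m) \<in> lin_hull S" using step LH_add_gen by blast
      thus "(\<lambda>m. x m + (y m + c * v m)) \<in> lin_hull S" by (simp add: algebra_simps)
    qed
  qed
  thus ?thesis using assms(2) by blast
qed

lemma LH_comb:
  assumes "x \<in> lin_hull S" "y \<in> lin_hull S" shows "(\<lambda>m. a * x m + b * y m) \<in> lin_hull S"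
  using LH_add[OF LH_scale[OF assms(2)] LH_scale[OF assms(1)]] .

lemma LH_map:
  assumes h0: "h (\<lambda>_. 0) = (\<lambda>_. 0)"
    and hlin: "\<And>x y a b. h (\<lambda>m. a * x m + b * y m) = (\<lambda>m. a * h x m + b * h y m)"
    and hS: "\<And>v. v \<in> S \<Longrightarrow> h v \<in> lin_hull S"
    and x: "x \<in> lin_hull S"
  shows "h x \<in> lin_hull S"
  using x
proof (induction rule: LH_induct)
  case zero then show ?case using h0 LH_zero by simp
next
  case (step x v c)
  have "h (\<lambda>m. 1 * x m + c * v m) = (\<lambda>m. 1 * h x m + c * h v m)" by (rule hlin)
  moreover have "(\<lambda>m. 1 * h x m + c * h v m) \<in> lin_hull S" using step LH_comb hS by blast
  ultimately show ?case by simp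
qed

lemma Tf_lin: "Tf g (\<lambda>m. a * x m + b * y m) = (\<lambda>m. a * Tf g x m + b * Tf g y m)"
  by (simp add: Tf_def fun_eq_iff algebra_simps)
lemma Bf_lin: "Bf g (\<lambda>m. a * x m + b * y m) = (\<lambda>m. a * Bf g x m + b * Bf g y m)"
  by (simp add: Bf_def fun_eq_iff algebra_simps)
lemma Nf_lin: "Nf (\<lambda>m. a * x m + b * y m) = (\<lambda>m. a * Nf x m + b * Nf y m)"
  by (simp add: Nf_def fun_eq_iff algebra_simps)
lemma Tfk_lin: "(Tf g ^^ k) (\<lambda>m. a * x m + b * y m) = (\<lambda>m. a * (Tf g ^^ k) x m + b * (Tf g ^^ k) y m)"
  by (induction k) (simp_all add: Tf_lin)
lemma Tfk_0: "(Tf g ^^ k) (\<lambda>_. 0) = (\<lambda>_. 0)"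
  by (induction k) (simp_all add: Tf_def)

lemma NT_comm: "Nf (Tf g y) = (\<lambda>m. Tf g (Nf y) m + 2 * (y m - Tf g y m))"
  by (simp add: Nf_def Tf_def fun_eq_iff algebra_simps)

lemma NTk_comm:
  "Nf ((Tf g ^^ k) x) = (\<lambda>m. (Tf g ^^ k) (Nf x) m + 2 * of_nat k * ((Tf g ^^ (k - 1)) x m - (Tf g ^^ k) x m))"
proof (induction k)
  case 0 then show ?case by simp
next
  case (Suc k)
  have "Nf ((Tf g ^^ Suc k) x) = Nf (Tf g ((Tf g ^^ k) x))" by simp
  also have "\<dots> = (\<lambda>m. Tf g (Nf ((Tf g ^^ k) x)) m + 2 * ((Tf g ^^ k) x m - (Tf g ^^ Suc k) x m))"
    by (simp add: NT_comm)
  also have "Tf g (Nf ((Tf g ^^ k) x)) = (\<lambda>m. (Tf g ^^ Suc k) (Nf x) m + 2 * of_nat k * ((Tf g ^^ k) x m - (Tf g ^^ Suc k) x m))"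
  proof (cases k)
    case 0 then show ?thesis by simp
  next
    case (Suc j)
    have "Tf g (Nf ((Tf g ^^ k) x)) = Tf g (\<lambda>m. 1 * (Tf g ^^ k) (Nf x) m + (2 * of_nat k) * ((Tf g ^^ j) x m - (Tf g ^^ k) x m))"
      using Suc.IH Suc by simp
    also have "(\<lambda>m. (Tf g ^^ j) x m - (Tf g ^^ k) x m) = (\<lambda>m. 1 * (Tf g ^^ j) x m + (-1) * (Tf g ^^ k) x m)"
      by simp
    hence "Tf g (\<lambda>m. 1 * (Tf g ^^ k) (Nf x) m + (2 * of_nat k) * ((Tf g ^^ j) x m - (Tf g ^^ k) x m))
        = Tf g (\<lambda>m. 1 * (Tf g ^^ k) (Nf x) m + (2 * of_nat k) * (\<lambda>m. 1 * (Tf g ^^ j) x m + (-1) * (Tf g ^^ k) x m) m)"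
      by simp
    also have "\<dots> = (\<lambda>m. (Tf g ^^ Suc k) (Nf x) m + 2 * of_nat k * ((Tf g ^^ k) x m - (Tf g ^^ Suc k) x m))"
      unfolding Tf_lin using Suc by (simp add: fun_eq_iff algebra_simps)
    finally show ?thesis .
  qed
  finally show ?case by (simp add: fun_eq_iff algebra_simps)
qed




context mtsetup begin

definition GG :: "(nat \<Rightarrow> complex) set" where
  "GG = {v. \<exists>n. \<exists>\<alpha>\<in>D_set \<beta> Mf. v = ww f \<alpha> n}"
definition VV :: "(nat \<Rightarrow> complex) set" where
  "VV = lin_hull GG"

lemma GG_ww: "\<alpha> \<in> D_set \<beta> Mf \<Longrightarrow> ww f \<alpha> n \<in> VV"
  unfolding VV_def by (rule LH_gen) (auto simp: GG_def)

lemma VV_l2: "x \<in> VV \<Longrightarrow> x \<in> l2"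
  unfolding VV_def
proof (induction rule: LH_induct)
  case zero then show ?case by simp
next
  case (step x v c)
  have "v \<in> GG" "x \<in> l2" using step by blast+
  hence "v \<in> l2" using Dset_facts ww_l2 by (auto simp: GG_def)
  hence "(\<lambda>m. 1 * x m + c * v m) \<in> l2" using \<open>x \<in> l2\<close> l2_lin by blast
  thus ?case by simp
qed

lemma VV_comb: "x \<in> VV \<Longrightarrow> y \<in> VV \<Longrightarrow> (\<lambda>m. a * x m + b * y m) \<in> VV"
  unfolding VV_def by (rule LH_comb)

lemma VV_Bf: "x \<in> VV \<Longrightarrow> Bf g x \<in> VV"
  unfolding VV_def
proof (rule LH_map[where h="Bf g"])
  show "Bf g (\<lambda>_. 0) = (\<lambda>_. 0)" by (simp add: Bf_def)
  show "Bf g (\<lambda>m. a * x m + b * y m) = (\<lambda>m. a * Bf g x m + b * Bf g y m)" for x y a b by (rule Bf_lin)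
  fix v assume "v \<in> GG"
  then obtain n \<alpha> where a: "\<alpha> \<in> D_set \<beta> Mf" and v: "v = ww f \<alpha> n" by (auto simp: GG_def)
  show "Bf g v \<in> lin_hull GG"
    unfolding v Bf_ww[OF gf Dset_facts(1)[OF a]] using VV_comb[OF GG_ww[OF a] GG_ww[OF a]] by (simp add: VV_def)
qed

lemma VV_Nf: "x \<in> VV \<Longrightarrow> Nf x \<in> VV"
  unfolding VV_def
proof (rule LH_map[where h="Nf"])
  show "Nf (\<lambda>_. 0) = (\<lambda>_. 0)" by (simp add: Nf_def)
  show "Nf (\<lambda>m. a * x m + b * y m) = (\<lambda>m. a * Nf x m + b * Nf y m)" for x y a b by (rule Nf_lin)
  fix v assume "v \<in> GG"
  then obtain n \<alpha> where a: "\<alpha> \<in> D_set \<beta> Mf" and v: "v = ww f \<alpha> n" by (auto simp: GG_def)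
  show "Nf v \<in> lin_hull GG"
    unfolding v Nf_ww[OF Dset_facts(1)[OF a]] using VV_comb[OF GG_ww[OF a] GG_ww[OF a]] by (simp add: VV_def)
qed

lemma VV_Tf: "x \<in> VV \<Longrightarrow> Tf g x \<in> VV"
proof -
  assume x: "x \<in> VV"
  have "(\<lambda>m. 1 * x m + (-1) * Bf g x m) \<in> VV" by (rule VV_comb[OF x VV_Bf[OF x]])
  thus ?thesis by (simp add: Tf_Bf)
qed

lemma VV_Tfk: "x \<in> VV \<Longrightarrow> (Tf g ^^ k) x \<in> VV"
  by (induction k) (auto intro: VV_Tf)

lemma VV_Tfk_l2: "x \<in> VV \<Longrightarrow> (Tf g ^^ k) x \<in> l2"
  using VV_Tfk VV_l2 by blast


end


context mtsetup begin
lemma gen_bound: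
  assumes a: "\<alpha> \<in> D_set \<beta> Mf"
  shows "\<exists>C. \<forall>k. l2norm ((Tf g ^^ k) (ww f \<alpha> n)) \<le> C * ((1 + cmod (1 - \<alpha>*\<beta>)) / 2)^k"
proof -
  define \<mu> where "\<mu> = 1 - \<alpha>*\<beta>"
  define s where "s = (1 + cmod \<mu>) / 2"
  have \<mu>1: "cmod \<mu> < 1" using Dset_facts(3)[OF a] by (simp add: \<mu>_def)
  have sp: "0 < s - cmod \<mu>" "0 \<le> s" using \<mu>1 by (auto simp: s_def)
  have Tl2: "(Tf g ^^ k) (ww f \<alpha> n) \<in> l2" for k n by (rule VV_Tfk_l2[OF GG_ww[OF a]])
  have Tww: "Tf g (ww f \<alpha> n) = (\<lambda>m. \<mu> * ww f \<alpha> n m + (- (of_nat n * \<beta>)) * ww f \<alpha> (n-1) m)" for n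
    unfolding Tf_Bf Bf_ww[OF gf Dset_facts(1)[OF a]] by (simp add: \<mu>_def fun_eq_iff algebra_simps)
  have rec: "l2norm ((Tf g ^^ Suc k) (ww f \<alpha> n)) \<le> cmod \<mu> * l2norm ((Tf g ^^ k) (ww f \<alpha> n))
      + real n * cmod \<beta> * l2norm ((Tf g ^^ k) (ww f \<alpha> (n-1)))" for k n
  proof -
    have "(Tf g ^^ Suc k) (ww f \<alpha> n) = (Tf g ^^ k) (Tf g (ww f \<alpha> n))" by (simp only: funpow_Suc_right comp_def)
    also have "\<dots> = (\<lambda>m. \<mu> * (Tf g ^^ k) (ww f \<alpha> n) m + (- (of_nat n * \<beta>)) * (Tf g ^^ k) (ww f \<alpha> (n-1)) m)"
      unfolding Tww Tfk_lin ..
    finally show ?thesis using l2norm_lin[OF Tl2 Tl2, of \<mu> k n "- (of_nat n * \<beta>)" k "n-1"]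
      by (simp add: norm_mult)
  qed
  have nn: "0 \<le> l2norm ((Tf g ^^ k) (ww f \<alpha> n))" for k n by (rule l2norm_nonneg[OF Tl2])
  have "\<exists>C. \<forall>k. l2norm ((Tf g ^^ k) (ww f \<alpha> n)) \<le> C * s^k"
  proof (induction n)
    case 0
    define C where "C = l2norm (ww f \<alpha> 0)"
    have "l2norm ((Tf g ^^ k) (ww f \<alpha> 0)) \<le> C * s^k" for k
    proof (induction k)
      case 0 then show ?case by (simp add: C_def)
    next
      case (Suc k)
      have "l2norm ((Tf g ^^ Suc k) (ww f \<alpha> 0)) \<le> cmod \<mu> * l2norm ((Tf g ^^ k) (ww f \<alpha> 0))"
        using rec[of k 0] by simp
      also have "\<dots> \<le> cmod \<mu> * (C * s^k)" using Suc by (intro mult_left_mono) auto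
      also have "\<dots> \<le> s * (C * s^k)"
        using sp nn[of 0 0] by (intro mult_right_mono) (auto simp: C_def)
      finally show ?case by (simp add: algebra_simps)
    qed
    then show ?case by blast
  next
    case (Suc n)
    then obtain C' where C': "\<And>k. l2norm ((Tf g ^^ k) (ww f \<alpha> n)) \<le> C' * s^k" by blast
    define C where "C = l2norm (ww f \<alpha> (Suc n)) + real (Suc n) * cmod \<beta> * \<bar>C'\<bar> / (s - cmod \<mu>)"
    have C0: "0 \<le> real (Suc n) * cmod \<beta> * \<bar>C'\<bar> / (s - cmod \<mu>)" using sp by simp
    have key: "real (Suc n) * cmod \<beta> * C' \<le> (s - cmod \<mu>) * C"
    proof -
      have "(s - cmod \<mu>) * C = (s - cmod \<mu>) * l2norm (ww f \<alpha> (Suc n)) + real (Suc n) * cmod \<beta> * \<bar>C'\<bar>"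
        using sp by (simp add: C_def field_simps)
      moreover have "0 \<le> (s - cmod \<mu>) * l2norm (ww f \<alpha> (Suc n))" using sp nn[of 0 "Suc n"] by simp
      moreover have "real (Suc n) * cmod \<beta> * C' \<le> real (Suc n) * cmod \<beta> * \<bar>C'\<bar>"
        by (intro mult_left_mono) auto
      ultimately show ?thesis by linarith
    qed
    have "l2norm ((Tf g ^^ k) (ww f \<alpha> (Suc n))) \<le> C * s^k" for k
    proof (induction k)
      case 0 then show ?case using C0 by (simp add: C_def)
    next
      case (Suc k)
      have "l2norm ((Tf g ^^ Suc k) (ww f \<alpha> (Suc n))) \<le> cmod \<mu> * l2norm ((Tf g ^^ k) (ww f \<alpha> (Suc n)))
          + real (Suc n) * cmod \<beta> * l2norm ((Tf g ^^ k) (ww f \<alpha> n))"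
        using rec[of k "Suc n"] by simp
      also have "\<dots> \<le> cmod \<mu> * (C * s^k) + real (Suc n) * cmod \<beta> * (C' * s^k)"
        using Suc C'[of k] by (intro add_mono mult_left_mono) auto
      also have "\<dots> = (cmod \<mu> * C + real (Suc n) * cmod \<beta> * C') * s^k" by (simp add: algebra_simps)
      also have "\<dots> \<le> (cmod \<mu> * C + (s - cmod \<mu>) * C) * s^k"
        using key sp by (intro mult_right_mono) auto
      also have "\<dots> = C * s^(Suc k)" by (simp add: algebra_simps)
      finally show ?case .
    qed
    then show ?case by blast
  qed
  thus ?thesis by (simp add: s_def \<mu>_def)
qed


end


context mtsetup begin
lemma VV_good:
  assumes "x \<in> VV"
  shows "\<exists>C \<sigma>. 0 \<le> \<sigma> \<and> \<sigma> < 1 \<and> (\<forall>k. l2norm ((Tf g ^^ k) x) \<le> C * \<sigma>^k)"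
  using assms unfolding VV_def
proof (induction rule: LH_induct)
  case zero
  have "l2norm (\<lambda>_. 0) = 0" by (simp add: l2norm_def)
  then show ?case by (intro exI[of _ 0] exI[of _ 0]) (simp add: Tfk_0)
next
  case (step x v c)
  obtain C1 \<sigma>1 where s1: "0 \<le> \<sigma>1" "\<sigma>1 < 1" and b1: "\<And>k. l2norm ((Tf g ^^ k) x) \<le> C1 * \<sigma>1^k"
    using step by blast
  have "v \<in> GG" using step by blast
  then obtain n \<alpha> where a: "\<alpha> \<in> D_set \<beta> Mf" and v: "v = ww f \<alpha> n" by (auto simp: GG_def)
  define \<sigma>2 where "\<sigma>2 = (1 + cmod (1 - \<alpha>*\<beta>)) / 2"
  have s2: "0 \<le> \<sigma>2" "\<sigma>2 < 1" using Dset_facts(3)[OF a] by (auto simp: \<sigma>2_def)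
  obtain C2 where b2: "\<And>k. l2norm ((Tf g ^^ k) v) \<le> C2 * \<sigma>2^k"
    using gen_bound[OF a, of n] unfolding v \<sigma>2_def by blast
  define \<sigma> where "\<sigma> = max \<sigma>1 \<sigma>2"
  have xV: "x \<in> VV" using step by (simp add: VV_def)
  have vV: "v \<in> VV" using GG_ww[OF a] v by simp
  have "l2norm ((Tf g ^^ k) (\<lambda>m. x m + c * v m)) \<le> (\<bar>C1\<bar> + cmod c * \<bar>C2\<bar>) * \<sigma>^k" for k
  proof -
    have "(Tf g ^^ k) (\<lambda>m. x m + c * v m) = (\<lambda>m. 1 * (Tf g ^^ k) x m + c * (Tf g ^^ k) v m)"
      using Tfk_lin[where g=g and k=k and a=1 and x=x and b=c and y=v] by simp
    hence "l2norm ((Tf g ^^ k) (\<lambda>m. x m + c * v m)) \<le> 1 * l2norm ((Tf g ^^ k) x) + cmod c * l2norm ((Tf g ^^ k) v)"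
      using l2norm_lin[OF VV_Tfk_l2[OF xV] VV_Tfk_l2[OF vV], where a=1 and b=c] by simp
    also have "\<dots> \<le> \<bar>C1\<bar> * \<sigma>^k + cmod c * (\<bar>C2\<bar> * \<sigma>^k)"
    proof (intro add_mono mult_left_mono)
      have "C1 * \<sigma>1^k \<le> \<bar>C1\<bar> * \<sigma>1^k" using s1 by (intro mult_right_mono) auto
      also have "\<dots> \<le> \<bar>C1\<bar> * \<sigma>^k" using s1 by (intro mult_left_mono power_mono) (auto simp: \<sigma>_def)
      finally show "1 * l2norm ((Tf g ^^ k) x) \<le> \<bar>C1\<bar> * \<sigma>^k" using b1[of k] by simp
      have "C2 * \<sigma>2^k \<le> \<bar>C2\<bar> * \<sigma>2^k" using s2 by (intro mult_right_mono) auto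
      also have "\<dots> \<le> \<bar>C2\<bar> * \<sigma>^k" using s2 by (intro mult_left_mono power_mono) (auto simp: \<sigma>_def)
      finally show "l2norm ((Tf g ^^ k) v) \<le> \<bar>C2\<bar> * \<sigma>^k" using b2[of k] by simp
    qed simp
    finally show ?thesis by (simp add: algebra_simps)
  qed
  moreover have "0 \<le> \<sigma>" "\<sigma> < 1" using s1 s2 by (auto simp: \<sigma>_def)
  ultimately show ?case by blast
qed

end



lemma l2_scale: "x \<in> l2 \<Longrightarrow> (\<lambda>m. a * x m) \<in> l2 \<and> l2norm (\<lambda>m. a * x m) \<le> cmod a * l2norm x"
  using l2_add_norm[of x x a 0] by simp

context mtsetup begin

definition ys :: "(nat \<Rightarrow> complex) \<Rightarrow> nat \<Rightarrow> (nat \<Rightarrow> complex)" where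
  "ys x k = (\<lambda>m. if k = 0 then 0 else 1 / of_nat k * (Tf g ^^ k) x m)"
definition ell :: "(nat \<Rightarrow> complex) \<Rightarrow> (nat \<Rightarrow> complex)" where
  "ell x = (\<lambda>m. \<Sum>k. ys x k m)"

lemma ell_conv:
  assumes x: "x \<in> VV"
  shows "conv_l2 (\<lambda>K m. \<Sum>k\<le>K. ys x k m) (ell x)"
proof -
  obtain C \<sigma> where s: "0 \<le> \<sigma>" "\<sigma> < 1" and b: "\<And>k. l2norm ((Tf g ^^ k) x) \<le> C * \<sigma>^k"
    using VV_good[OF x] by blast
  have yl2: "ys x k \<in> l2 \<and> l2norm (ys x k) \<le> \<bar>C\<bar> * \<sigma>^k" for k
  proof (cases "k = 0")
    case True
    have "l2norm (\<lambda>_. 0) = 0" by (simp add: l2norm_def)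
    then show ?thesis using True s by (simp add: ys_def)
  next
    case False
    have Tl: "(Tf g ^^ k) x \<in> l2" by (rule VV_Tfk_l2[OF x])
    have e: "ys x k = (\<lambda>m. (1 / of_nat k) * (Tf g ^^ k) x m)" using False by (simp add: ys_def)
    have mem: "ys x k \<in> l2" unfolding e using l2_scale[OF Tl] by blast
    have "l2norm (ys x k) \<le> cmod (1 / of_nat k :: complex) * l2norm ((Tf g ^^ k) x)"
      unfolding e using l2_scale[OF Tl] by blast
    also have "\<dots> \<le> 1 * l2norm ((Tf g ^^ k) x)"
      using False l2norm_nonneg[OF Tl] by (intro mult_right_mono) (auto simp: norm_divide)
    also have "\<dots> \<le> \<bar>C\<bar> * \<sigma>^k" using b[of k] s by (simp add: order_trans[OF _ mult_right_mono[OF abs_ge_self]])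
    finally show ?thesis using mem by simp
  qed
  have sm: "summable (\<lambda>k. l2norm (ys x k))"
  proof (rule summable_comparison_test'[where g="\<lambda>k. \<bar>C\<bar> * \<sigma>^k"])
    show "summable (\<lambda>k. \<bar>C\<bar> * \<sigma>^k)" using s by (intro summable_mult) simp
    show "norm (l2norm (ys x k)) \<le> \<bar>C\<bar> * \<sigma>^k" for k
      using yl2[of k] l2norm_nonneg[of "ys x k"] by simp
  qed
  show ?thesis unfolding ell_def by (rule l2_series) (use yl2 sm in auto)
qed

lemma ell_l2: "x \<in> VV \<Longrightarrow> ell x \<in> l2"
  using ell_conv unfolding conv_l2_def by blast

lemma T_to_0:
  assumes x: "x \<in> VV"
  shows "(\<lambda>K. (Tf g ^^ K) x m) \<longlonglongrightarrow> 0"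
proof -
  obtain C \<sigma> where s: "0 \<le> \<sigma>" "\<sigma> < 1" and b: "\<And>k. l2norm ((Tf g ^^ k) x) \<le> C * \<sigma>^k"
    using VV_good[OF x] by blast
  have "(\<lambda>K. C * \<sigma>^K) \<longlonglongrightarrow> C * 0"
    by (intro tendsto_mult tendsto_const LIMSEQ_power_zero) (use s in simp)
  hence z: "(\<lambda>K. C * \<sigma>^K) \<longlonglongrightarrow> 0" by simp
  show ?thesis
    by (rule Lim_null_comparison[OF _ z], rule always_eventually, rule allI,
        rule order_trans[OF coord_le_l2norm[OF VV_Tfk_l2[OF x]] b])
qed

lemma lower_VV: "y \<in> VV \<Longrightarrow> lower_op g y = Some (Bf g y) \<and> Bf g y \<in> VV"
  using VV_l2[of y] VV_l2[OF VV_Bf[of y]] VV_Bf[of y]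
  by (simp add: lower_op_def Let_def Bf_def)

lemma diff_VV: "y \<in> VV \<Longrightarrow> diff_op I_op (lower_op g) y = Some (Tf g y) \<and> Tf g y \<in> VV"
  using lower_VV[of y] VV_l2[of y] VV_Tf[of y]
  by (simp add: diff_op_def I_op_def Tf_Bf)

lemma log_eq:
  assumes x: "x \<in> VV"
  shows "log_op (lower_op g) x = Some (\<lambda>m. - ell x m)"
proof -
  have VVl2: "VV \<subseteq> l2" using VV_l2 by blast
  have pB: "pow_op (lower_op g) k x = Some ((Bf g ^^ k) x)" for k
  proof -
    have "pow_op (lower_op g) k x = Some ((Bf g ^^ k) x) \<and> (Bf g ^^ k) x \<in> VV"
      by (rule pow_op_inv[OF VVl2 _ x]) (rule lower_VV)
    thus ?thesis by blast
  qed
  have pT: "pow_op (diff_op I_op (lower_op g)) k x = Some ((Tf g ^^ k) x)" for k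
  proof -
    have "pow_op (diff_op I_op (lower_op g)) k x = Some ((Tf g ^^ k) x) \<and> (Tf g ^^ k) x \<in> VV"
      by (rule pow_op_inv[OF VVl2 _ x]) (rule diff_VV)
    thus ?thesis by blast
  qed
  have eqf: "(\<lambda>K m. \<Sum>k\<in>{1..K}. 1 / of_nat k * the (pow_op (diff_op I_op (lower_op g)) k x) m)
      = (\<lambda>K m. \<Sum>k\<le>K. ys x k m)"
  proof (intro ext)
    fix K m :: nat
    have "{..K} = insert 0 {1..K}" by (auto simp: Suc_le_eq)
    hence "(\<Sum>k\<le>K. ys x k m) = ys x 0 m + (\<Sum>k\<in>{1..K}. ys x k m)" by simp
    also have "\<dots> = (\<Sum>k\<in>{1..K}. 1 / of_nat k * the (pow_op (diff_op I_op (lower_op g)) k x) m)"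
      by (simp add: ys_def pT)
    finally show "(\<Sum>k\<in>{1..K}. 1 / of_nat k * the (pow_op (diff_op I_op (lower_op g)) k x) m) = (\<Sum>k\<le>K. ys x k m)" by simp
  qed
  have dom: "x \<in> (\<Inter>k. dom_op (pow_op (lower_op g) k)) \<and> x \<in> (\<Inter>k. dom_op (pow_op (diff_op I_op (lower_op g)) k))"
    by (simp add: dom_op_def pB pT)
  show ?thesis unfolding log_op_def if_P[OF dom] eqf lim_l2_eq[OF ell_conv[OF x]] by simp
qed

lemma comm_pt:
  assumes x: "x \<in> VV"
  shows "Nf (ell x) = (\<lambda>m. ell (Nf x) m + 2 * x m)"
proof
  fix m
  have L: "(\<lambda>K. of_nat m * (\<Sum>k\<le>K. ys x k m)) \<longlonglongrightarrow> of_nat m * ell x m"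
    by (intro tendsto_mult tendsto_const conv_pointwise[OF ell_conv[OF x]])
  have id: "of_nat m * (\<Sum>k\<le>K. ys x k m) = (\<Sum>k\<le>K. ys (Nf x) k m) + 2 * (x m - (Tf g ^^ K) x m)" for K
  proof (induction K)
    case 0 then show ?case by (simp add: ys_def)
  next
    case (Suc K)
    have NT: "of_nat m * (Tf g ^^ Suc K) x m = (Tf g ^^ Suc K) (Nf x) m + 2 * of_nat (Suc K) * ((Tf g ^^ K) x m - (Tf g ^^ Suc K) x m)"
      using fun_cong[OF NTk_comm[where g=g and k="Suc K" and x=x], of m] by (simp add: Nf_def del: funpow.simps)
    have "of_nat m * ys x (Suc K) m = ys (Nf x) (Suc K) m + 2 * ((Tf g ^^ K) x m - (Tf g ^^ Suc K) x m)"
    proof -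
      have "of_nat m * ys x (Suc K) m = (of_nat m * (Tf g ^^ Suc K) x m) / of_nat (Suc K)"
        by (simp add: ys_def del: funpow.simps of_nat_Suc)
      also have "\<dots> = ((Tf g ^^ Suc K) (Nf x) m + 2 * of_nat (Suc K) * ((Tf g ^^ K) x m - (Tf g ^^ Suc K) x m)) / of_nat (Suc K)"
        by (simp only: NT)
      also have "\<dots> = ys (Nf x) (Suc K) m + 2 * ((Tf g ^^ K) x m - (Tf g ^^ Suc K) x m)"
        by (simp add: ys_def field_simps del: funpow.simps of_nat_Suc)
      finally show ?thesis .
    qed
    note st = this
    have "of_nat m * (\<Sum>k\<le>Suc K. ys x k m) = of_nat m * (\<Sum>k\<le>K. ys x k m) + of_nat m * ys x (Suc K) m"
      by (simp add: algebra_simps del: funpow.simps)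
    also have "\<dots> = ((\<Sum>k\<le>K. ys (Nf x) k m) + 2 * (x m - (Tf g ^^ K) x m))
        + (ys (Nf x) (Suc K) m + 2 * ((Tf g ^^ K) x m - (Tf g ^^ Suc K) x m))"
      by (simp only: Suc.IH st)
    also have "\<dots> = (\<Sum>k\<le>Suc K. ys (Nf x) k m) + 2 * (x m - (Tf g ^^ Suc K) x m)"
      by (simp add: algebra_simps del: funpow.simps)
    finally show ?case .
  qed
  have R: "(\<lambda>K. (\<Sum>k\<le>K. ys (Nf x) k m) + 2 * (x m - (Tf g ^^ K) x m)) \<longlonglongrightarrow> ell (Nf x) m + 2 * (x m - 0)"
    by (intro tendsto_intros conv_pointwise[OF ell_conv[OF VV_Nf[OF x]]] T_to_0[OF x])
  have "of_nat m * ell x m = ell (Nf x) m + 2 * (x m - 0)"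
    using LIMSEQ_unique[OF L R[folded id]] .
  thus "Nf (ell x) m = ell (Nf x) m + 2 * x m" by (simp add: Nf_def)
qed

lemma comm_main: "comm_eq_on N_op (scale_op (\<i> / 2) (log_op (lower_op g))) (scale_op (- \<i>) I_op) VV"
  unfolding comm_eq_on_def
proof (intro conjI ballI subsetI)
  fix \<phi> assume p: "\<phi> \<in> VV"
  have pl: "\<phi> \<in> l2" by (rule VV_l2[OF p])
  have Np: "Nf \<phi> \<in> VV" by (rule VV_Nf[OF p])
  have Npl: "Nf \<phi> \<in> l2" by (rule VV_l2[OF Np])
  have Nop: "N_op \<phi> = Some (Nf \<phi>)" using pl Npl by (simp add: N_op_def Nf_def)
  define u where "u = (\<lambda>m. \<i> / 2 * - ell \<phi> m)"
  have S1: "scale_op (\<i> / 2) (log_op (lower_op g)) \<phi> = Some u"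
    by (simp add: scale_op_def log_eq[OF p] u_def)
  have S2: "scale_op (\<i> / 2) (log_op (lower_op g)) (Nf \<phi>) = Some (\<lambda>m. \<i> / 2 * - ell (Nf \<phi>) m)"
    by (simp add: scale_op_def log_eq[OF Np])
  have ul: "u \<in> l2" using l2_scale[OF ell_l2[OF p], of "-(\<i>/2)"] by (simp add: u_def)
  have Nu: "Nf u = (\<lambda>m. (-(\<i>/2)) * ell (Nf \<phi>) m + (-\<i>) * \<phi> m)"
    using comm_pt[OF p] by (auto simp: u_def Nf_def fun_eq_iff algebra_simps)
  have Nul: "Nf u \<in> l2" unfolding Nu by (rule l2_lin[OF ell_l2[OF Np] pl])
  have Nou: "N_op u = Some (Nf u)" using ul Nul by (simp add: N_op_def Nf_def)
  have C1: "comp_op N_op (scale_op (\<i> / 2) (log_op (lower_op g))) \<phi> = Some (Nf u)"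
    by (simp add: comp_op_def S1 Nou)
  have C2: "comp_op (scale_op (\<i> / 2) (log_op (lower_op g))) N_op \<phi> = Some (\<lambda>m. \<i> / 2 * - ell (Nf \<phi>) m)"
    by (simp add: comp_op_def Nop S2)
  show "\<phi> \<in> dom_op (comp_op N_op (scale_op (\<i> / 2) (log_op (lower_op g)))) \<inter>
      dom_op (comp_op (scale_op (\<i> / 2) (log_op (lower_op g))) N_op)"
    by (simp add: dom_op_def C1 C2)
  show "diff_op (comp_op N_op (scale_op (\<i> / 2) (log_op (lower_op g)))) (comp_op (scale_op (\<i> / 2) (log_op (lower_op g))) N_op) \<phi>
      = scale_op (- \<i>) I_op \<phi>"
    by (simp add: diff_op_def C1 C2 Nu scale_op_def I_op_def pl fun_eq_iff algebra_simps)
qed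

end


theorem mainTheorem7:
  fixes f g :: "nat \<Rightarrow> complex" and \<beta> :: complex and Mf :: ereal
  assumes "\<forall>n. even n \<longrightarrow> g (n + 2) * f (n + 2) - (if 2 \<le> n then g n * f n else 0) = \<beta>"
    and "\<forall>n\<ge>1. cmod (f (2 * n)) > 0"
    and "(\<lambda>n. ereal (real n / cmod (f (2 * n)))) \<longlonglongrightarrow> Mf"
  shows "(\<forall>n. \<forall>\<alpha>\<in>D_set \<beta> Mf. \<exists>\<xi> v. xi_vec \<alpha> f = Some \<xi> \<and> pow_op (raise_op f) n \<xi> = Some v)
    \<and> comm_eq_on N_op (scale_op (\<i> / 2) (log_op (lower_op g))) (scale_op (- \<i>) I_op)
        (lin_hull {v. \<exists>n. \<exists>\<alpha>\<in>D_set \<beta> Mf. \<exists>\<xi>. xi_vec \<alpha> f = Some \<xi> \<and> pow_op (raise_op f) n \<xi> = Some v})"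
proof -
  interpret mtsetup f g \<beta> Mf by (unfold_locales) (use assms in auto)
  have P1: "\<forall>n. \<forall>\<alpha>\<in>D_set \<beta> Mf. \<exists>\<xi> v. xi_vec \<alpha> f = Some \<xi> \<and> pow_op (raise_op f) n \<xi> = Some v"
  proof (intro allI ballI)
    fix n \<alpha> assume a: "\<alpha> \<in> D_set \<beta> Mf"
    show "\<exists>\<xi> v. xi_vec \<alpha> f = Some \<xi> \<and> pow_op (raise_op f) n \<xi> = Some v"
      using xi_vec_eq[OF Dset_facts(1,2)[OF a]] pow_raise_ww[OF Dset_facts(1,2)[OF a]] by blast
  qed
  have SE: "{v. \<exists>n. \<exists>\<alpha>\<in>D_set \<beta> Mf. \<exists>\<xi>. xi_vec \<alpha> f = Some \<xi> \<and> pow_op (raise_op f) n \<xi> = Some v} = GG"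
  proof (intro set_eqI iffI)
    fix v assume "v \<in> {v. \<exists>n. \<exists>\<alpha>\<in>D_set \<beta> Mf. \<exists>\<xi>. xi_vec \<alpha> f = Some \<xi> \<and> pow_op (raise_op f) n \<xi> = Some v}"
    then obtain n \<alpha> \<xi> where a: "\<alpha> \<in> D_set \<beta> Mf" and x: "xi_vec \<alpha> f = Some \<xi>" and p: "pow_op (raise_op f) n \<xi> = Some v"
      by blast
    have "\<xi> = ww f \<alpha> 0" using x xi_vec_eq[OF Dset_facts(1,2)[OF a]] by simp
    hence "v = ww f \<alpha> n" using p pow_raise_ww[OF Dset_facts(1,2)[OF a]] by simp
    thus "v \<in> GG" using a by (auto simp: GG_def)
  next
    fix v assume "v \<in> GG"
    then obtain n \<alpha> where a: "\<alpha> \<in> D_set \<beta> Mf" and v: "v = ww f \<alpha> n" by (auto simp: GG_def)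
    show "v \<in> {v. \<exists>n. \<exists>\<alpha>\<in>D_set \<beta> Mf. \<exists>\<xi>. xi_vec \<alpha> f = Some \<xi> \<and> pow_op (raise_op f) n \<xi> = Some v}"
      using a v xi_vec_eq[OF Dset_facts(1,2)[OF a]] pow_raise_ww[OF Dset_facts(1,2)[OF a]] by blast
  qed
  show ?thesis using P1 comm_main unfolding SE VV_def by blast
qed

end
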